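(* Let $X$ be an exponential vector space over a field $K$. If $A$ and $B$ are two bases of $X\smallsetminus X_0$, then $A$ and $B$ have the same cardinality.
   Context: An exponential vector space (evs) over a field $K$ is a partially ordered set $(X,\leq)$ with a binary operation $+$ on $X$ and a map $K\times X\to X$, $(\alpha,x)\mapsto \alpha x$, such that: (A1) $(X,+)$ is a commutative semigroup with identity $\theta$; (A2) $x\leq y$ implies $x+z\leq y+z$ and $\alpha x\leq \alpha y$ for all $z\in X$, $\alpha\in K$; (A3) $\alpha(x+y)=\alpha x+\alpha y$, $\alpha(\beta x)=(\alpha\beta)x$, $(\alpha+\beta)x\leq \alpha x+\beta x$, $1x=x$; (A4) $\alpha x=\theta$ iff $\alpha=0$ or $x=\theta$; (A5) $x+(-1)x=\theta$ iff $x\in X_0$, where $X_0:=\{z\in X: y\not\leq z \text{ for all } y\in X\smallsetminus\{z\}\}$ (the set of minimal elements, called the primitive space; it is a vector space over $K$); (A6) for each $x\in X$ there is $p\in X_0$ with $p\leq x$. For $x\in X\smallsetminus X_0$ let $L(x):=\{z\in X: z\geq \alpha x+p \text{ for some } \alpha\in K\smallsetminus\{0\},\ p\in X_0\}$. A subset $B\subseteq X\smallsetminus X_0$ generates $X\smallsetminus X_0$ if $X\smallsetminus X_0=\bigcup_{b\in B}L(b)$. Elements $x,y\in X\smallsetminus X_0$ are orderly dependent if $x\in L(y)$ or $y\in L(x)$, and orderly independent otherwise; $B\subseteq X\smallsetminus X_0$ is orderly independent if any two distinct members of $B$ are orderly independent. A basis of $X\smallsetminus X_0$ is an orderly independent subset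 of $X\smallsetminus X_0$ that generates $X\smallsetminus X_0$. *)

theory Defs
  imports Main "HOL-Library.Equipollence"
begin

definition primitive :: "('x \<Rightarrow> 'x \<Rightarrow> bool) \<Rightarrow> 'x set" where
  "primitive le = {z. \<forall>y. y \<noteq> z \<longrightarrow> \<not> le y z}"

definition evs :: "('x \<Rightarrow> 'x \<Rightarrow> bool) \<Rightarrow> ('x \<Rightarrow> 'x \<Rightarrow> 'x) \<Rightarrow> ('k::field \<Rightarrow> 'x \<Rightarrow> 'x) \<Rightarrow> 'x \<Rightarrow> bool" where
  "evs le add smult theta \<longleftrightarrow>
     \<comment> \<open>partial order\<close>
     (\<forall>x. le x x) \<and> (\<forall>x y. le x y \<and> le y x \<longrightarrow> x = y) \<and>
     (\<forall>x y z. le x y \<and> le y z \<longrightarrow> le x z) \<and>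
     \<comment> \<open>A1\<close>
     (\<forall>x y z. add (add x y) z = add x (add y z)) \<and> (\<forall>x y. add x y = add y x) \<and>
     (\<forall>x. add x theta = x) \<and>
     \<comment> \<open>A2\<close>
     (\<forall>x y z. le x y \<longrightarrow> le (add x z) (add y z)) \<and>
     (\<forall>x y \<alpha>. le x y \<longrightarrow> le (smult \<alpha> x) (smult \<alpha> y)) \<and>
     \<comment> \<open>A3\<close>
     (\<forall>\<alpha> x y. smult \<alpha> (add x y) = add (smult \<alpha> x) (smult \<alpha> y)) \<and>
     (\<forall>\<alpha> \<beta> x. smult \<alpha> (smult \<beta> x) = smult (\<alpha> * \<beta>) x) \<and>
     (\<forall>\<alpha> \<beta> x. le (smult (\<alpha> + \<beta>) x) (add (smult \<alpha> x) (smult \<beta> x))) \<and>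
     (\<forall>x. smult 1 x = x) \<and>
     \<comment> \<open>A4\<close>
     (\<forall>\<alpha> x. smult \<alpha> x = theta \<longleftrightarrow> \<alpha> = 0 \<or> x = theta) \<and>
     \<comment> \<open>A5\<close>
     (\<forall>x. add x (smult (-1) x) = theta \<longleftrightarrow> x \<in> primitive le) \<and>
     \<comment> \<open>A6\<close>
     (\<forall>x. \<exists>p \<in> primitive le. le p x)"

definition Lset :: "('x \<Rightarrow> 'x \<Rightarrow> bool) \<Rightarrow> ('x \<Rightarrow> 'x \<Rightarrow> 'x) \<Rightarrow> ('k::field \<Rightarrow> 'x \<Rightarrow> 'x) \<Rightarrow> 'x \<Rightarrow> 'x set" where
  "Lset le add smult x =
     {z. \<exists>\<alpha> p. \<alpha> \<noteq> 0 \<and> p \<in> primitive le \<and> le (add (smult \<alpha> x) p) z}"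

definition generates :: "('x \<Rightarrow> 'x \<Rightarrow> bool) \<Rightarrow> ('x \<Rightarrow> 'x \<Rightarrow> 'x) \<Rightarrow> ('k::field \<Rightarrow> 'x \<Rightarrow> 'x) \<Rightarrow> 'x set \<Rightarrow> bool" where
  "generates le add smult B \<longleftrightarrow>
     B \<subseteq> - primitive le \<and> - primitive le = (\<Union>b\<in>B. Lset le add smult b)"

definition orderly_dependent :: "('x \<Rightarrow> 'x \<Rightarrow> bool) \<Rightarrow> ('x \<Rightarrow> 'x \<Rightarrow> 'x) \<Rightarrow> ('k::field \<Rightarrow> 'x \<Rightarrow> 'x) \<Rightarrow> 'x \<Rightarrow> 'x \<Rightarrow> bool" where
  "orderly_dependent le add smult x y \<longleftrightarrow>
     x \<in> Lset le add smult y \<or> y \<in> Lset le add smult x"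

definition orderly_independent_set :: "('x \<Rightarrow> 'x \<Rightarrow> bool) \<Rightarrow> ('x \<Rightarrow> 'x \<Rightarrow> 'x) \<Rightarrow> ('k::field \<Rightarrow> 'x \<Rightarrow> 'x) \<Rightarrow> 'x set \<Rightarrow> bool" where
  "orderly_independent_set le add smult B \<longleftrightarrow>
     B \<subseteq> - primitive le \<and>
     (\<forall>x\<in>B. \<forall>y\<in>B. x \<noteq> y \<longrightarrow> \<not> orderly_dependent le add smult x y)"

definition is_basis :: "('x \<Rightarrow> 'x \<Rightarrow> bool) \<Rightarrow> ('x \<Rightarrow> 'x \<Rightarrow> 'x) \<Rightarrow> ('k::field \<Rightarrow> 'x \<Rightarrow> 'x) \<Rightarrow> 'x set \<Rightarrow> bool" where
  "is_basis le add smult B \<longleftrightarrow>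
     orderly_independent_set le add smult B \<and> generates le add smult B"

end

theory Submission
  imports Defs
begin

lemma evsA0:
  fixes smult :: "'k::field \<Rightarrow> 'x \<Rightarrow> 'x"
  assumes "evs le add smult theta"
  shows "(\<forall>x. le x x)"
  using assms unfolding evs_def by (elim conjE) assumption

lemma evsA1:
  fixes smult :: "'k::field \<Rightarrow> 'x \<Rightarrow> 'x"
  assumes "evs le add smult theta"
  shows "(\<forall>x y. le x y \<and> le y x \<longrightarrow> x = y)"
  using assms unfolding evs_def by (elim conjE) assumption

lemma evsA2:
  fixes smult :: "'k::field \<Rightarrow> 'x \<Rightarrow> 'x"
  assumes "evs le add smult theta"
  shows "(\<forall>x y z. le x y \<and> le y z \<longrightarrow> le x z)"
  using assms unfolding evs_def by (elim conjE) assumption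

lemma evsA3:
  fixes smult :: "'k::field \<Rightarrow> 'x \<Rightarrow> 'x"
  assumes "evs le add smult theta"
  shows "(\<forall>x y z. add (add x y) z = add x (add y z))"
  using assms unfolding evs_def by (elim conjE) assumption

lemma evsA4:
  fixes smult :: "'k::field \<Rightarrow> 'x \<Rightarrow> 'x"
  assumes "evs le add smult theta"
  shows "(\<forall>x y. add x y = add y x)"
  using assms unfolding evs_def by (elim conjE) assumption

lemma evsA5:
  fixes smult :: "'k::field \<Rightarrow> 'x \<Rightarrow> 'x"
  assumes "evs le add smult theta"
  shows "(\<forall>x. add x theta = x)"
  using assms unfolding evs_def by (elim conjE) assumption

lemma evsA6:
  fixes smult :: "'k::field \<Rightarrow> 'x \<Rightarrow> 'x"
  assumes "evs le add smult theta"
  shows "(\<forall>x y z. le x y \<longrightarrow> le (add x z) (add y z))"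
  using assms unfolding evs_def by (elim conjE) assumption

lemma evsA7:
  fixes smult :: "'k::field \<Rightarrow> 'x \<Rightarrow> 'x"
  assumes "evs le add smult theta"
  shows "(\<forall>x y \<alpha>. le x y \<longrightarrow> le (smult \<alpha> x) (smult \<alpha> y))"
  using assms unfolding evs_def by (elim conjE) assumption

lemma evsA8:
  fixes smult :: "'k::field \<Rightarrow> 'x \<Rightarrow> 'x"
  assumes "evs le add smult theta"
  shows "(\<forall>\<alpha> x y. smult \<alpha> (add x y) = add (smult \<alpha> x) (smult \<alpha> y))"
  using assms unfolding evs_def by (elim conjE) assumption

lemma evsA9:
  fixes smult :: "'k::field \<Rightarrow> 'x \<Rightarrow> 'x"
  assumes "evs le add smult theta"
  shows "(\<forall>\<alpha> \<beta> x. smult \<alpha> (smult \<beta> x) = smult (\<alpha> * \<beta>) x)"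
  using assms unfolding evs_def by (elim conjE) assumption

lemma evsA10:
  fixes smult :: "'k::field \<Rightarrow> 'x \<Rightarrow> 'x"
  assumes "evs le add smult theta"
  shows "(\<forall>\<alpha> \<beta> x. le (smult (\<alpha> + \<beta>) x) (add (smult \<alpha> x) (smult \<beta> x)))"
  using assms unfolding evs_def by (elim conjE) assumption

lemma evsA11:
  fixes smult :: "'k::field \<Rightarrow> 'x \<Rightarrow> 'x"
  assumes "evs le add smult theta"
  shows "(\<forall>x. smult 1 x = x)"
  using assms unfolding evs_def by (elim conjE) assumption

lemma evsA12:
  fixes smult :: "'k::field \<Rightarrow> 'x \<Rightarrow> 'x"
  assumes "evs le add smult theta"
  shows "(\<forall>\<alpha> x. smult \<alpha> x = theta \<longleftrightarrow> \<alpha> = 0 \<or> x = theta)"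
  using assms unfolding evs_def by (elim conjE) assumption

lemma evsA13:
  fixes smult :: "'k::field \<Rightarrow> 'x \<Rightarrow> 'x"
  assumes "evs le add smult theta"
  shows "(\<forall>x. add x (smult (-1) x) = theta \<longleftrightarrow> x \<in> primitive le)"
  using assms unfolding evs_def by (elim conjE) assumption

lemma evsA14:
  fixes smult :: "'k::field \<Rightarrow> 'x \<Rightarrow> 'x"
  assumes "evs le add smult theta"
  shows "(\<forall>x. \<exists>p \<in> primitive le. le p x)"
  using assms unfolding evs_def by (elim conjE) assumption

lemma evsD:
  fixes smult :: "'k::field \<Rightarrow> 'x \<Rightarrow> 'x"
  assumes "evs le add smult theta"
  shows "add x theta = x" "smult a theta = theta"
    "add x (smult (-1) x) = theta \<longleftrightarrow> x \<in> primitive le"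
  using evsA5[OF assms] evsA12[OF assms] evsA13[OF assms] by simp_all

lemma theta_prim:
  assumes E: "evs le add smult theta"
  shows "theta \<in> primitive le"
proof -
  have "add theta (smult (-1) theta) = theta" by (simp only: evsD(1,2)[OF E])
  thus ?thesis by (rule iffD1[OF evsD(3)[OF E]])
qed

lemma prim_smult:
  fixes smult :: "'k::field \<Rightarrow> 'x \<Rightarrow> 'x"
  assumes E: "evs le add smult theta" and p: "p \<in> primitive le"
  shows "smult b p \<in> primitive le"
proof -
  note A5 = evsA13[OF E, rule_format]
  note D = evsA8[OF E, rule_format]
  note M = evsA9[OF E, rule_format]
  note Z = evsA12[OF E, rule_format]
  have "add p (smult (-1) p) = theta" using p by (rule iffD2[OF A5])
  hence "smult b (add p (smult (-1) p)) = theta" using Z by simp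
  hence "add (smult b p) (smult (b * -1) p) = theta" by (simp only: D M)
  moreover have "smult (b * -1) p = smult (-1) (smult b p)"
  proof -
    have "b * -1 = -1 * b" by simp
    thus ?thesis by (simp only: M)
  qed
  ultimately have "add (smult b p) (smult (-1) (smult b p)) = theta"
    by (metis (no_types))
  thus ?thesis by (rule iffD1[OF A5])
qed

lemma prim_add:
  fixes smult :: "'k::field \<Rightarrow> 'x \<Rightarrow> 'x"
  assumes E: "evs le add smult theta" and p: "p \<in> primitive le" and q: "q \<in> primitive le"
  shows "add p q \<in> primitive le"
proof -
  note A5 = evsA13[OF E, rule_format]
  note D = evsA8[OF E, rule_format]
  note As = evsA3[OF E, rule_format]
  note C = evsA4[OF E, rule_format]
  note T = evsA5[OF E, rule_format]
  have AC4: "add (add u v) (add w t) = add (add u w) (add v t)" for u v w t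
  proof -
    have "add (add u v) (add w t) = add u (add v (add w t))" by (rule As)
    also have "\<dots> = add u (add (add v w) t)" by (simp only: As)
    also have "\<dots> = add u (add (add w v) t)" using C[of v w] by (rule arg_cong[where f="\<lambda>s. add u (add s t)"])
    also have "\<dots> = add (add u w) (add v t)" by (simp only: As)
    finally show ?thesis .
  qed
  have "add (add p q) (smult (-1) (add p q)) = add (add p q) (add (smult (-1) p) (smult (-1) q))"
    using D by simp
  also have "\<dots> = add (add p (smult (-1) p)) (add q (smult (-1) q))"
    by (rule AC4)
  also have "\<dots> = theta"
  proof -
    have "add p (smult (-1) p) = theta" using p by (rule iffD2[OF A5])
    moreover have "add q (smult (-1) q) = theta" using q by (rule iffD2[OF A5])
    ultimately show ?thesis using T by simp
  qed
  finally show ?thesis by (rule iffD1[OF A5])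
qed

lemma L_refl:
  fixes smult :: "'k::field \<Rightarrow> 'x \<Rightarrow> 'x"
  assumes E: "evs le add smult theta"
  shows "x \<in> Lset le add smult x"
proof -
  have "le (add (smult (1::'k) x) theta) x" by (simp only: evsA11[OF E, rule_format] evsA5[OF E, rule_format] evsA0[OF E, rule_format])
  moreover have "(1::'k) \<noteq> 0" by simp
  ultimately show ?thesis unfolding Lset_def using theta_prim[OF E] by blast
qed

lemma L_trans:
  fixes smult :: "'k::field \<Rightarrow> 'x \<Rightarrow> 'x"
  assumes E: "evs le add smult theta"
    and y: "y \<in> Lset le add smult x" and z: "z \<in> Lset le add smult y"
  shows "z \<in> Lset le add smult x"
proof -
  note D = evsA8[OF E, rule_format]
  note M = evsA9[OF E, rule_format]
  note As = evsA3[OF E, rule_format]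
  note Tr = evsA2[OF E, rule_format]
  note Ma = evsA6[OF E, rule_format]
  note Ms = evsA7[OF E, rule_format]
  obtain a p where a: "a \<noteq> 0" "p \<in> primitive le" "le (add (smult a x) p) y"
    using y unfolding Lset_def by blast
  obtain b q where b: "b \<noteq> 0" "q \<in> primitive le" "le (add (smult b y) q) z"
    using z unfolding Lset_def by blast
  have "le (smult b (add (smult a x) p)) (smult b y)" using Ms a(3) by blast
  hence "le (add (smult (b*a) x) (smult b p)) (smult b y)" by (simp only: D M)
  hence "le (add (add (smult (b*a) x) (smult b p)) q) (add (smult b y) q)" using Ma by blast
  hence "le (add (smult (b*a) x) (add (smult b p) q)) (add (smult b y) q)" by (simp only: As)
  hence "le (add (smult (b*a) x) (add (smult b p) q)) z" using b(3) by (rule Tr[OF conjI])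
  moreover have "add (smult b p) q \<in> primitive le"
    using prim_add[OF E prim_smult[OF E a(2)] b(2)] .
  moreover have "b * a \<noteq> 0" using a b by simp
  ultimately show ?thesis unfolding Lset_def by blast
qed

lemma basis_lepoll:
  fixes smult :: "'k::field \<Rightarrow> 'x \<Rightarrow> 'x"
  assumes E: "evs le add smult theta"
    and HA: "is_basis le add smult A" and HB: "is_basis le add smult B"
  shows "A \<lesssim> B"
proof -
  have AP: "A \<subseteq> - primitive le" and BP: "B \<subseteq> - primitive le"
    using HA HB unfolding is_basis_def generates_def by blast+
  have GA: "- primitive le = (\<Union>a\<in>A. Lset le add smult a)"
    and GB: "- primitive le = (\<Union>b\<in>B. Lset le add smult b)"
    using HA HB unfolding is_basis_def generates_def by blast+
  have IA: "\<And>x y. x \<in> A \<Longrightarrow> y \<in> A \<Longrightarrow> x \<in> Lset le add smult y \<Longrightarrow> x = y"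
    using HA unfolding is_basis_def orderly_independent_set_def orderly_dependent_def by blast
  have ex: "\<exists>b\<in>B. a \<in> Lset le add smult b" if "a \<in> A" for a
    using that AP GB by blast
  define f where "f a = (SOME b. b \<in> B \<and> a \<in> Lset le add smult b)" for a
  have f: "f a \<in> B \<and> a \<in> Lset le add smult (f a)" if "a \<in> A" for a
    unfolding f_def using someI_ex[OF ex[OF that, unfolded Bex_def]] .
  have bk: "f a \<in> Lset le add smult a" if aA: "a \<in> A" for a
  proof -
    obtain a' where a': "a' \<in> A" "f a \<in> Lset le add smult a'"
      using f[OF aA] BP GA by blast
    have "a \<in> Lset le add smult a'" using L_trans[OF E a'(2)] f[OF aA] by blast
    hence "a = a'" using IA aA a' by blast
    thus ?thesis using a' by simp
  qed
  have "inj_on f A"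
  proof (rule inj_onI)
    fix x y assume x: "x \<in> A" and y: "y \<in> A" and eq: "f x = f y"
    have "x \<in> Lset le add smult (f y)" using f[OF x] eq by simp
    hence "x \<in> Lset le add smult y" by (rule L_trans[OF E bk[OF y]])
    thus "x = y" using IA x y by blast
  qed
  moreover have "f ` A \<subseteq> B" using f by blast
  ultimately show ?thesis unfolding lepoll_def by (intro exI conjI)
qed

theorem mainTheorem3:
  fixes le :: "'x \<Rightarrow> 'x \<Rightarrow> bool" and add :: "'x \<Rightarrow> 'x \<Rightarrow> 'x"
    and smult :: "'k::field \<Rightarrow> 'x \<Rightarrow> 'x" and theta :: 'x
    and A B :: "'x set"
  assumes "evs le add smult theta"
    and "is_basis le add smult A"
    and "is_basis le add smult B"
  shows "A \<approx> B"
  using basis_lepoll[OF assms(1) assms(2) assms(3)] basis_lepoll[OF assms(1) assms(3) assms(2)]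
  by (rule lepoll_antisym)

end
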